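(* Let $G>0$, $T>0$, let $F\colon\mathbb R\to\mathbb R^2$ be $T$-periodic and of class $C^1$, and let $a\in(0,1)$ be such that $m_a(t,x,p)=\tfrac12|x|^2-\tfrac12a^2$ is a curvature bound function for $v_\lambda$ for every $\lambda\in[0,1]$. Then there exists $b>0$ such that $\mathbb R\times(\Gamma_a\cap\Delta_b)$ is a bound set for $v_\lambda$ for all $\lambda\in[0,1]$.
   Context: Let $\Omega=\{(x,p)\in\mathbb R^2\times\mathbb R^2:|x|<1\}$ and for $\lambda\in[0,1]$ let $v_\lambda(t,x,p)=\Big(1,\ p,\ \Big(G\sqrt{1-|x|^2}-\tfrac{(x^Tp)^2}{1-|x|^2}-|p|^2\Big)x+\lambda\big((x^TF(t))x-F(t)\big)\Big)$ on $\mathbb R\times\Omega$, with local flow $\phi^\lambda$. A $C^2$ function $e$ on an open subset $W\subset\mathbb R\times\Omega$ is a curvature bound function for $v$ if for every $z\in W$ with $e(z)=0$: $De(z)v(z)=0$ implies $v(z)^TD^2e(z)v(z)+De(z)Dv(z)v(z)>0$ (derivatives in all variables $(t,x,p)$). For $0<a<1$, $b>0$: $\Gamma_a=\{(x,p)\in\mathbb R^2\times\mathbb R^2:|x|\le a\}$, $\Delta_b=\{(x,p)\in\mathbb R^2\times\mathbb R^2:|x|<1,\ b|x|+|p|\le b\}$. A closed set $E\subset\mathbb R\times\Omega$ is a bound set for $v_\lambda$ if for every $\epsilon>0$ there is no $z\in\partial E$ with $\phi^\lambda_s(z)\in E$ for all $s\in(-\epsilon,\epsilon)$. *)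

theory Defs
  imports "HOL-Analysis.Analysis"
begin

type_synonym state = "real \<times> (real^2) \<times> (real^2)"

definition Omega :: "((real^2) \<times> (real^2)) set" where
  "Omega = {(x, p). norm x < 1}"

definition Gamma :: "real \<Rightarrow> ((real^2) \<times> (real^2)) set" where
  "Gamma a = {(x, p). norm x \<le> a}"

definition Delta :: "real \<Rightarrow> ((real^2) \<times> (real^2)) set" where
  "Delta b = {(x, p). norm x < 1 \<and> b * norm x + norm p \<le> b}"

definition vfield :: "real \<Rightarrow> (real \<Rightarrow> real^2) \<Rightarrow> real \<Rightarrow> state \<Rightarrow> state" where
  "vfield G F lam z = (case z of (t, x, p) \<Rightarrow>
     (1, p,
      (G * sqrt (1 - (norm x)\<^sup>2) - (x \<bullet> p)\<^sup>2 / (1 - (norm x)\<^sup>2) - (norm p)\<^sup>2) *\<^sub>R x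
      + lam *\<^sub>R ((x \<bullet> F t) *\<^sub>R x - F t)))"

definition m_fun :: "real \<Rightarrow> state \<Rightarrow> real" where
  "m_fun a z = (case z of (t, x, p) \<Rightarrow> (norm x)\<^sup>2 / 2 - a\<^sup>2 / 2)"

definition curvature_bound_function ::
  "('a::euclidean_space \<Rightarrow> 'a) \<Rightarrow> 'a set \<Rightarrow> ('a \<Rightarrow> real) \<Rightarrow> bool" where
  "curvature_bound_function v W e \<longleftrightarrow> open W \<and>
    (\<exists>De D2e.
       (\<forall>z\<in>W. (e has_derivative blinfun_apply (De z)) (at z)) \<and>
       (\<forall>z\<in>W. (De has_derivative blinfun_apply (D2e z)) (at z)) \<and>
       continuous_on W D2e \<and>
       (\<forall>z\<in>W. e z = 0 \<longrightarrow> blinfun_apply (De z) (v z) = 0 \<longrightarrow>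
          (\<forall>Dv. (v has_derivative Dv) (at z) \<longrightarrow>
             blinfun_apply (blinfun_apply (D2e z) (v z)) (v z)
               + blinfun_apply (De z) (Dv (v z)) > 0)))"

text \<open>The flow is expressed through solutions of y' = v(y), y(0) = z (unique, as v is C^1).\<close>
definition bound_set :: "('a::real_normed_vector \<Rightarrow> 'a) \<Rightarrow> 'a set \<Rightarrow> 'a set \<Rightarrow> bool" where
  "bound_set v D E \<longleftrightarrow> E \<subseteq> D \<and> closedin (top_of_set D) E \<and>
    (\<forall>\<epsilon>>0. \<not> (\<exists>z\<in>frontier E. \<exists>y. y 0 = z \<and>
        (\<forall>s\<in>{-\<epsilon><..<\<epsilon>}. (y has_vector_derivative v (y s)) (at s) \<and> y s \<in> E)))"

end

theory Submission
  imports Defs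
begin

lemma no_strict_max:
  fixes g h :: "real \<Rightarrow> real" and \<epsilon> k :: real
  assumes e0: "0 < \<epsilon>"
    and gle: "\<And>s. \<bar>s\<bar> < \<epsilon> \<Longrightarrow> g s \<le> g 0"
    and gd: "\<And>s. \<bar>s\<bar> < \<epsilon> \<Longrightarrow> (g has_real_derivative h s) (at s)"
    and hd: "(h has_real_derivative k) (at 0)" and k0: "0 < k"
  shows False
proof -
  have h0: "h 0 = 0"
    using DERIV_local_max[OF gd[of 0] e0] gle e0 by (simp add: abs_minus_commute)
  obtain d where d0: "d > 0" and dh: "\<And>t. t > 0 \<Longrightarrow> t < d \<Longrightarrow> h 0 < h (0 + t)"
    using DERIV_pos_inc_right[OF hd k0] by blast
  define s1 where "s1 = min d \<epsilon> / 2"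
  have s10: "0 < s1" using d0 e0 s1_def by simp
  have s1d: "s1 < d" "s1 < \<epsilon>" using d0 e0 s1_def by auto
  obtain z where z0: "z > 0" "z < s1" and eq: "g s1 - g 0 = (s1 - 0) * h z"
    using MVT2[OF s10, of g h] gd s1d by (metis abs_of_nonneg le_less_trans)
  have "h z > 0" using dh[of z] z0 s1d h0 by simp
  then have "g s1 - g 0 > 0" using eq s10 by simp
  moreover have "g s1 \<le> g 0" using gle[of s1] s10 s1d by simp
  ultimately show False by simp
qed

definition fld :: "real \<Rightarrow> (real \<Rightarrow> real^2) \<Rightarrow> real \<Rightarrow> real \<Rightarrow> real^2 \<Rightarrow> real^2 \<Rightarrow> real^2" where
  "fld G F lam t x p = (G * sqrt (1 - (norm x)\<^sup>2) - (x \<bullet> p)\<^sup>2 / (1 - (norm x)\<^sup>2) - (norm p)\<^sup>2) *\<^sub>R x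
      + lam *\<^sub>R ((x \<bullet> F t) *\<^sub>R x - F t)"

lemma vfield_eq: "vfield G F lam = (\<lambda>z. (1, snd (snd z), fld G F lam (fst z) (fst (snd z)) (snd (snd z))))"
  by (auto simp: vfield_def fld_def fun_eq_iff split: prod.splits)

lemma vfield_diff:
  fixes z :: state
  assumes "norm (fst (snd z)) < 1"
    and FD: "\<And>t. (F has_vector_derivative F' t) (at t)"
  shows "\<exists>D. (vfield G F lam has_derivative D) (at z)"
proof -
  have F1: "((\<lambda>z::state. F (fst z)) has_derivative (\<lambda>h. fst h *\<^sub>R F' (fst z))) (at z)"
    using has_derivative_compose[OF has_derivative_fst[OF has_derivative_ident] FD[of "fst z", unfolded has_vector_derivative_def]]
    by simp
  have nx: "0 < 1 - fst (snd z) \<bullet> fst (snd z)" using assms(1) by (simp add: power2_norm_eq_inner[symmetric] power_less_one_iff abs_less_iff)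
  have eq: "vfield G F lam = (\<lambda>z. (1, snd (snd z), (G * sqrt (1 - fst (snd z) \<bullet> fst (snd z)) - (fst (snd z) \<bullet> snd (snd z))\<^sup>2 / (1 - fst (snd z) \<bullet> fst (snd z)) - snd (snd z) \<bullet> snd (snd z)) *\<^sub>R fst (snd z)
      + lam *\<^sub>R ((fst (snd z) \<bullet> F (fst z)) *\<^sub>R fst (snd z) - F (fst z))))"
    unfolding vfield_eq fld_def by (simp add: power2_norm_eq_inner)
  show ?thesis unfolding eq
    apply (rule exI)
    apply (rule derivative_intros F1 | use nx in simp)+
    done
qed

lemma traj_comp:
  fixes y :: "real \<Rightarrow> state"
  assumes "(y has_vector_derivative vfield G F lam (y s)) (at s)"
  shows "((\<lambda>s. fst (y s)) has_real_derivative 1) (at s)"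
    and "((\<lambda>s. fst (snd (y s))) has_vector_derivative snd (snd (y s))) (at s)"
    and "((\<lambda>s. snd (snd (y s))) has_vector_derivative fld G F lam (fst (y s)) (fst (snd (y s))) (snd (snd (y s)))) (at s)"
proof -
  have d: "(y has_derivative (\<lambda>h. h *\<^sub>R vfield G F lam (y s))) (at s)"
    using assms by (simp add: has_vector_derivative_def)
  have v: "vfield G F lam (y s) = (1, snd (snd (y s)), fld G F lam (fst (y s)) (fst (snd (y s))) (snd (snd (y s))))"
    by (simp add: vfield_eq)
  show "((\<lambda>s. fst (y s)) has_real_derivative 1) (at s)"
    using has_derivative_fst[OF d] unfolding v has_field_derivative_def
  proof -
    assume "((\<lambda>x. fst (y x)) has_derivative (\<lambda>h. fst (h *\<^sub>R (1::real, snd (snd (y s)), fld G F lam (fst (y s)) (fst (snd (y s))) (snd (snd (y s))))))) (at s)"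
    moreover have "(\<lambda>h. fst (h *\<^sub>R (1::real, snd (snd (y s)), fld G F lam (fst (y s)) (fst (snd (y s))) (snd (snd (y s)))))) = (*) 1" by (simp add: fun_eq_iff)
    ultimately show "((\<lambda>s. fst (y s)) has_derivative (*) 1) (at s)" by simp
  qed
  show "((\<lambda>s. fst (snd (y s))) has_vector_derivative snd (snd (y s))) (at s)"
    using has_derivative_fst[OF has_derivative_snd[OF d]] unfolding v has_vector_derivative_def by simp
  show "((\<lambda>s. snd (snd (y s))) has_vector_derivative fld G F lam (fst (y s)) (fst (snd (y s))) (snd (snd (y s)))) (at s)"
    using has_derivative_snd[OF has_derivative_snd[OF d]] unfolding v has_vector_derivative_def by simp
qed


lemma case_curv:
  fixes v :: "'a::euclidean_space \<Rightarrow> 'a" and y :: "real \<Rightarrow> 'a"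
  assumes cb: "curvature_bound_function v W e"
    and e0: "0 < \<epsilon>"
    and yd: "\<And>s. \<bar>s\<bar> < \<epsilon> \<Longrightarrow> (y has_vector_derivative v (y s)) (at s)"
    and yW: "\<And>s. \<bar>s\<bar> < \<epsilon> \<Longrightarrow> y s \<in> W"
    and ele: "\<And>s. \<bar>s\<bar> < \<epsilon> \<Longrightarrow> e (y s) \<le> 0"
    and ey0: "e (y 0) = 0"
    and vd: "(v has_derivative Dv) (at (y 0))"
  shows False
proof -
  obtain De D2e where
    eD: "\<forall>z\<in>W. (e has_derivative blinfun_apply (De z)) (at z)" and
    DeD: "\<forall>z\<in>W. (De has_derivative blinfun_apply (D2e z)) (at z)" and
    curv: "\<forall>z\<in>W. e z = 0 \<longrightarrow> blinfun_apply (De z) (v z) = 0 \<longrightarrow>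
          (\<forall>Dv. (v has_derivative Dv) (at z) \<longrightarrow>
             blinfun_apply (blinfun_apply (D2e z) (v z)) (v z) + blinfun_apply (De z) (Dv (v z)) > 0)"
    using cb unfolding curvature_bound_function_def by blast
  define g where "g s = e (y s)" for s
  define h where "h s = blinfun_apply (De (y s)) (v (y s))" for s
  have gd: "(g has_real_derivative h s) (at s)" if "\<bar>s\<bar> < \<epsilon>" for s
  proof -
    have yd': "(y has_derivative (\<lambda>t. t *\<^sub>R v (y s))) (at s)"
      using yd[OF that] by (simp add: has_vector_derivative_def)
    have "(g has_derivative (\<lambda>t. blinfun_apply (De (y s)) (t *\<^sub>R v (y s)))) (at s)"
      unfolding g_def using has_derivative_compose[OF yd' eD[rule_format, OF yW[OF that]]] .
    moreover have "(\<lambda>t. blinfun_apply (De (y s)) (t *\<^sub>R v (y s))) = (*) (h s)"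
      by (simp add: fun_eq_iff h_def blinfun.scaleR_right)
    ultimately show ?thesis by (simp add: has_field_derivative_def)
  qed
  have y0W: "y 0 \<in> W" using yW e0 by simp
  have h0: "h 0 = 0"
  proof -
    have "\<forall>s. \<bar>0 - s\<bar> < \<epsilon> \<longrightarrow> g s \<le> g 0" using ele ey0 by (simp add: g_def)
    then show ?thesis using DERIV_local_max[OF gd[of 0] e0] e0 by simp
  qed
  define k where "k = blinfun_apply (blinfun_apply (D2e (y 0)) (v (y 0))) (v (y 0)) + blinfun_apply (De (y 0)) (Dv (v (y 0)))"
  have k0: "k > 0" using curv y0W ey0 h0 vd unfolding k_def h_def by blast
  have hd: "(h has_real_derivative k) (at 0)"
  proof -
    have yd': "(y has_derivative (\<lambda>t. t *\<^sub>R v (y 0))) (at 0)"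
      using yd[of 0] e0 by (simp add: has_vector_derivative_def)
    have d1: "((\<lambda>s. De (y s)) has_derivative (\<lambda>t. blinfun_apply (D2e (y 0)) (t *\<^sub>R v (y 0)))) (at 0)"
      using has_derivative_compose[OF yd' DeD[rule_format, OF y0W]] .
    have d2: "((\<lambda>s. v (y s)) has_derivative (\<lambda>t. Dv (t *\<^sub>R v (y 0)))) (at 0)"
      using has_derivative_compose[OF yd' vd] .
    have d3: "(h has_derivative (\<lambda>t. blinfun_apply (De (y 0)) (Dv (t *\<^sub>R v (y 0))) + blinfun_apply (blinfun_apply (D2e (y 0)) (t *\<^sub>R v (y 0))) (v (y 0)))) (at 0)"
      unfolding h_def using bounded_bilinear.FDERIV[OF bounded_bilinear_blinfun_apply d1 d2] .
    have lin: "linear Dv" using vd by (simp add: has_derivative_linear)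
    have "(\<lambda>t. blinfun_apply (De (y 0)) (Dv (t *\<^sub>R v (y 0))) + blinfun_apply (blinfun_apply (D2e (y 0)) (t *\<^sub>R v (y 0))) (v (y 0))) = (*) k"
      by (simp add: fun_eq_iff k_def linear_scale[OF lin] blinfun.scaleR_right blinfun.scaleR_left algebra_simps)
    then show ?thesis using d3 by (simp add: has_field_derivative_def)
  qed
  show False
    using no_strict_max[OF e0 _ gd hd k0] ele ey0 by (simp add: g_def)
qed


lemma inner_deriv_const:
  fixes X :: "real \<Rightarrow> 'a::real_inner"
  assumes "(X has_vector_derivative d) (at s)"
  shows "((\<lambda>s. X s \<bullet> c) has_real_derivative d \<bullet> c) (at s)"
proof -
  have "((\<lambda>s. X s \<bullet> c) has_derivative (\<lambda>h. (h *\<^sub>R d) \<bullet> c)) (at s)"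
    using has_derivative_inner_left[OF assms[unfolded has_vector_derivative_def]] .
  moreover have "(\<lambda>h. (h *\<^sub>R d) \<bullet> c) = (*) (d \<bullet> c)" by (simp add: fun_eq_iff)
  ultimately show ?thesis by (simp add: has_field_derivative_def)
qed

lemma case_zero:
  fixes X Pp :: "real \<Rightarrow> real^2" and F :: "real \<Rightarrow> real^2"
  assumes e0: "0 < \<epsilon>"
    and Xd: "(X has_vector_derivative Pp 0) (at 0)"
    and Pd: "(Pp has_vector_derivative fld G F lam t0 (X 0) (Pp 0)) (at 0)"
    and X0: "X 0 = 0" and Pn: "norm (Pp 0) = b" and b0: "0 < b"
    and le: "\<And>s. \<bar>s\<bar> < \<epsilon> \<Longrightarrow> b * norm (X s) + norm (Pp s) \<le> b"
    and FM: "norm (F t0) \<le> M" and bM: "M < b\<^sup>2" and l0: "0 \<le> lam" and l1: "lam \<le> 1"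
  shows False
proof -
  define c where "c = Pp 0"
  define g where "g s = X s \<bullet> c + (Pp s \<bullet> c) / b - b" for s
  have fl: "fld G F lam t0 (X 0) (Pp 0) = - (lam *\<^sub>R F t0)" using X0 by (simp add: fld_def)
  have gd: "(g has_real_derivative c \<bullet> c + (fld G F lam t0 (X 0) (Pp 0) \<bullet> c) / b) (at 0)"
    unfolding g_def c_def
    using DERIV_diff[OF DERIV_add[OF inner_deriv_const[OF Xd] DERIV_cdivide[OF inner_deriv_const[OF Pd]]] DERIV_const]
    by simp
  have cc: "c \<bullet> c = b\<^sup>2" using Pn by (simp add: c_def power2_norm_eq_inner[symmetric])
  have g0: "g 0 = 0" using X0 cc b0 by (simp add: g_def c_def power2_eq_square)
  have gle: "g s \<le> g 0" if "\<bar>0 - s\<bar> < \<epsilon>" for s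
  proof -
    have 1: "X s \<bullet> c \<le> b * norm (X s)" using norm_cauchy_schwarz[of "X s" c] Pn by (simp add: c_def mult.commute)
    have "Pp s \<bullet> c \<le> norm (Pp s) * b" using norm_cauchy_schwarz[of "Pp s" c] Pn by (simp add: c_def)
    then have 2: "(Pp s \<bullet> c) / b \<le> norm (Pp s)" using b0 by (simp add: divide_le_eq)
    show ?thesis using 1 2 le[of s] that g0 by (simp add: g_def)
  qed
  have "c \<bullet> c + (fld G F lam t0 (X 0) (Pp 0) \<bullet> c) / b = 0"
    using DERIV_local_max[OF gd e0] gle by blast
  moreover have "(fld G F lam t0 (X 0) (Pp 0) \<bullet> c) / b \<ge> - M"
  proof -
    have "norm (F t0) * norm c \<le> M * b" using FM Pn b0 by (simp add: c_def mult_right_mono)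
    then have 1: "\<bar>F t0 \<bullet> c\<bar> \<le> M * b" using Cauchy_Schwarz_ineq2[of "F t0" c] by linarith
    have "lam * (F t0 \<bullet> c) \<le> lam * \<bar>F t0 \<bullet> c\<bar>" using l0 by (intro mult_left_mono) auto
    also have "\<dots> \<le> 1 * \<bar>F t0 \<bullet> c\<bar>" using l1 by (intro mult_right_mono) auto
    finally have "lam * (F t0 \<bullet> c) \<le> M * b" using 1 by simp
    then have "fld G F lam t0 (X 0) (Pp 0) \<bullet> c \<ge> - (M * b)" using fl by simp
    then show ?thesis using b0 by (simp add: le_divide_eq)
  qed
  ultimately show False using cc bM by linarith
qed

lemma key_ineq:
  fixes r q b B ph ps ch et Ph lam G M M1 a N P dB dN dP k d0 E2 E3 :: real
  assumes r0: "0 < r" and ra: "r \<le> a" and a1: "a < 1"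
    and b1: "1 \<le> b" and q_def: "q = b * (1 - r)"
    and Bb: "\<bar>B\<bar> \<le> r * q" and phb: "\<bar>ph\<bar> \<le> r * M" and psb: "\<bar>ps\<bar> \<le> q * M"
    and Ph0: "0 \<le> Ph" and PhM: "Ph \<le> M\<^sup>2" and chb: "\<bar>ch\<bar> \<le> r * M1" and etb: "\<bar>et\<bar> \<le> q * M1"
    and l0: "0 \<le> lam" and l1: "lam \<le> 1" and G0: "0 < G" and M0: "0 \<le> M" and M10: "0 \<le> M1"
    and N_def: "N = G * sqrt (1 - r\<^sup>2) - B\<^sup>2 / (1 - r\<^sup>2) - q\<^sup>2"
    and P_def: "P = N * B + lam * (ph * B - ps)"
    and dB_def: "dB = q\<^sup>2 + N * r\<^sup>2 + lam * ph * (r\<^sup>2 - 1)"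
    and dN_def: "dN = - G * B / sqrt (1 - r\<^sup>2) - (2 * B * dB * (1 - r\<^sup>2) + 2 * B ^ 3) / (1 - r\<^sup>2)\<^sup>2 - 2 * P"
    and dP_def: "dP = dN * B + N * dB + lam * ((ps + ch) * B + ph * dB - (N * ph + lam * (ph\<^sup>2 - Ph) + et))"
    and k_def: "k = b * (dB / r - B * B / r ^ 3) + dP / q - P * P / q ^ 3"
    and h0: "b * B / r + P / q = 0"
    and d0_def: "d0 = 1 - a\<^sup>2"
    and E2_def: "E2 = 16*G*M\<^sup>2/d0 + 32*M\<^sup>2*(1+G+M)/d0 + 512*M^4/d0\<^sup>2 + 4*M\<^sup>2 + 4*M*M1 + (G + 16*M\<^sup>2/d0)*M + M\<^sup>2"
    and E3_def: "E3 = 16*M\<^sup>2 + (16*M\<^sup>2 + E2 + M + M1)/(1-a)"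
    and C1: "4 * M \<le> b\<^sup>2 * (1 - a)"
    and C2: "16*M\<^sup>2/d0 + M \<le> b\<^sup>2 * (1-a)\<^sup>2 * d0 / 2"
    and C3: "E3 < b\<^sup>2 * (1-a)\<^sup>2 * d0 / 8"
  shows "0 < k"
proof -
  define D where "D = 1 - r\<^sup>2"
  have r1: "r < 1" using ra a1 by linarith
  have a0: "0 < a" using r0 ra by linarith
  have "a\<^sup>2 < 1" using a0 a1 by (simp add: power_less_one_iff abs_less_iff)
  then have d0pos: "0 < d0" using d0_def by simp
  have d01: "d0 \<le> 1" using d0_def by simp
  have Dd0: "d0 \<le> D" using D_def d0_def ra r0 by (simp add: power_mono)
  have D0: "0 < D" using Dd0 d0pos by linarith
  have D1: "D \<le> 1" using D_def by simp
  have q0: "0 < q" using q_def b1 r1 by simp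
  have qlow: "b * (1 - a) \<le> q" using q_def ra b1 by simp
  have qb: "q \<le> b" using q_def r0 b1 by simp
  have sq1: "sqrt D \<le> 1" using D1 by simp
  have sqD: "D \<le> sqrt D"
  proof -
    have "sqrt D * sqrt D = D" using D0 by simp
    moreover have "sqrt D * sqrt D \<le> sqrt D * 1" using sq1 D0 by (intro mult_left_mono) auto
    ultimately show ?thesis by simp
  qed
  have sqd0: "d0 \<le> sqrt D" using sqD Dd0 by linarith
  have N_D: "N = G * sqrt D - B\<^sup>2 / D - q\<^sup>2" using N_def D_def by simp
  define H where "H = b / r + (N + lam * ph) / q"
  have BH: "B * H = lam * ps / q"
  proof -
    have "b * B / r + (N * B + lam * (ph * B - ps)) / q = 0" using h0 P_def by simp
    then show ?thesis unfolding H_def using r0 q0 by (simp add: field_simps)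
  qed
  have B2: "B\<^sup>2 \<le> r\<^sup>2 * q\<^sup>2"
  proof -
    have "\<bar>B\<bar>\<^sup>2 \<le> (r * q)\<^sup>2" using Bb by (intro power_mono) auto
    then show ?thesis by (simp add: power_mult_distrib)
  qed
  have Nlow: "N \<ge> - q\<^sup>2 / D"
  proof -
    have "B\<^sup>2 / D \<le> r\<^sup>2 * q\<^sup>2 / D" using B2 D0 by (intro divide_right_mono) auto
    moreover have "r\<^sup>2 * q\<^sup>2 / D + q\<^sup>2 = q\<^sup>2 * (r\<^sup>2 + D) / D" using D0 by (simp add: field_simps)
    moreover have "r\<^sup>2 + D = 1" using D_def by simp
    ultimately have "r\<^sup>2 * q\<^sup>2 / D + q\<^sup>2 = q\<^sup>2 / D" by simp
    moreover have "0 \<le> G * sqrt D" using G0 D0 by simp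
    ultimately show ?thesis using N_D \<open>B\<^sup>2 / D \<le> r\<^sup>2 * q\<^sup>2 / D\<close> by linarith
  qed
  have lph: "\<bar>lam * ph\<bar> \<le> r * M"
  proof -
    have "\<bar>lam * ph\<bar> = lam * \<bar>ph\<bar>" using l0 by (simp add: abs_mult)
    also have "\<dots> \<le> 1 * \<bar>ph\<bar>" using l1 by (intro mult_right_mono) auto
    finally show ?thesis using phb by simp
  qed
  have qD: "q / D = b / (1 + r)"
  proof -
    have "D = (1 - r) * (1 + r)" by (simp add: D_def power2_eq_square algebra_simps)
    then show ?thesis using q_def r0 r1 by simp
  qed
  have Hl1: "H \<ge> b / r - b / (1 + r) - r * M / q"
  proof -
    have "(N + lam * ph) / q \<ge> (- q\<^sup>2 / D - r * M) / q" using Nlow lph q0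
      by (intro divide_right_mono) auto
    moreover have "(- q\<^sup>2 / D - r * M) / q = - (q / D) - r * M / q" using q0 D0
      by (simp add: field_simps power2_eq_square)
    ultimately show ?thesis unfolding H_def using qD by linarith
  qed
  have Hl2: "b / r - b / (1 + r) \<ge> b / (2 * r)"
  proof -
    have "b / r - b / (1 + r) = b / (r * (1 + r))" using r0 by (simp add: field_simps)
    moreover have "b / (2 * r) \<le> b / (r * (1 + r))" using r0 r1 b1
      by (intro divide_left_mono) (auto simp: algebra_simps intro!: mult_pos_pos add_pos_pos)
    ultimately show ?thesis by simp
  qed
  have Hl3: "r * M / q \<le> b / (4 * r)"
  proof -
    have "r * M / q \<le> 1 * M / (b * (1 - a))" using r1 r0 M0 qlow b1 a1
      by (intro frac_le mult_right_mono) auto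
    also have "\<dots> \<le> b / 4" using C1 b1 a1 by (simp add: field_simps power2_eq_square)
    also have "\<dots> \<le> b / (4 * r)" using r0 r1 b1 by (intro divide_left_mono) auto
    finally show ?thesis .
  qed
  have Hlow: "H \<ge> b / (4 * r)"
  proof -
    have "b / (2 * r) = b / (4 * r) + b / (4 * r)" by (simp add: field_simps)
    then show ?thesis using Hl1 Hl2 Hl3 by linarith
  qed
  have Hpos: "0 < H" using Hlow b1 r0 by (smt (verit) divide_pos_pos)
  define \<beta> where "\<beta> = 4 * M / b"
  have be0: "0 \<le> \<beta>" using M0 b1 \<beta>_def by simp
  have beb: "\<beta> * b = 4 * M" using b1 \<beta>_def by simp
  have be4: "\<beta> \<le> 4 * M"
  proof -
    have "4 * M / b \<le> 4 * M / 1" using b1 M0 by (intro divide_left_mono) auto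
    then show ?thesis using \<beta>_def by simp
  qed
  have Bsm: "\<bar>B\<bar> \<le> r * \<beta>"
  proof -
    have "\<bar>B\<bar> * H = \<bar>lam * ps / q\<bar>" using BH Hpos by (metis abs_mult abs_of_pos)
    also have "\<dots> = lam * \<bar>ps\<bar> / q" using l0 q0 by (simp add: abs_mult)
    also have "\<dots> \<le> 1 * (q * M) / q" using l0 l1 psb q0 by (intro divide_right_mono mult_mono) auto
    also have "\<dots> = M" using q0 by simp
    finally have 1: "\<bar>B\<bar> * H \<le> M" .
    have "\<bar>B\<bar> * (b / (4 * r)) \<le> \<bar>B\<bar> * H" using Hlow by (intro mult_left_mono) auto
    with 1 have "\<bar>B\<bar> * (b / (4 * r)) \<le> M" by linarith
    then show ?thesis unfolding \<beta>_def using r0 b1 by (simp add: field_simps)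
  qed
  have r2: "r\<^sup>2 = 1 - D" using D_def by simp
  have r21: "r\<^sup>2 \<le> 1" using r0 r1 by (simp add: power_le_one)
  have Bbe: "\<bar>B\<bar> \<le> \<beta>" using Bsm r1 be0 by (smt (verit) mult_right_mono mult_left_le_one_le r0)
  have B2r: "B\<^sup>2 \<le> r\<^sup>2 * \<beta>\<^sup>2"
  proof -
    have "\<bar>B\<bar>\<^sup>2 \<le> (r * \<beta>)\<^sup>2" using Bsm by (intro power_mono) auto
    then show ?thesis by (simp add: power_mult_distrib)
  qed
  have B2be: "B\<^sup>2 \<le> \<beta>\<^sup>2"
  proof -
    have "\<bar>B\<bar>\<^sup>2 \<le> \<beta>\<^sup>2" using Bbe by (intro power_mono) auto
    then show ?thesis by simp
  qed
  have be16: "\<beta>\<^sup>2 \<le> 16 * M\<^sup>2"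
  proof -
    have "\<beta>\<^sup>2 \<le> (4 * M)\<^sup>2" using be4 be0 by (intro power_mono) auto
    then show ?thesis by (simp add: power_mult_distrib)
  qed
  have B16: "B\<^sup>2 \<le> 16 * M\<^sup>2" using B2be be16 by linarith
  have bebsq: "b\<^sup>2 * \<beta>\<^sup>2 = 16 * M\<^sup>2"
  proof -
    have "b\<^sup>2 * \<beta>\<^sup>2 = (\<beta> * b)\<^sup>2" by (simp add: power_mult_distrib)
    then show ?thesis using beb by (simp add: power_mult_distrib)
  qed
  have dB_D: "dB = q\<^sup>2 * D + r\<^sup>2 * G * sqrt D - r\<^sup>2 * B\<^sup>2 / D - lam * ph * D"
    unfolding dB_def N_D r2 using D0 by (simp add: field_simps)
  have t1: "r\<^sup>2 * B\<^sup>2 / D \<le> 16 * M\<^sup>2 / d0"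
  proof -
    have "r\<^sup>2 * B\<^sup>2 \<le> 1 * (16 * M\<^sup>2)" using r21 B16 by (intro mult_mono) auto
    then show ?thesis using d0pos Dd0 by (intro frac_le) auto
  qed
  have t2: "\<bar>lam * ph * D\<bar> \<le> M"
  proof -
    have "\<bar>lam * ph * D\<bar> = \<bar>lam * ph\<bar> * D" using D0 by (simp add: abs_mult)
    also have "\<dots> \<le> (r * M) * 1" using lph D1 D0 by (intro mult_mono) auto
    also have "\<dots> \<le> 1 * M" using r1 r0 M0 by (simp add: mult_left_le_one_le)
    finally show ?thesis by simp
  qed
  have t3: "0 \<le> r\<^sup>2 * G * sqrt D" using G0 D0 by simp
  have q2D: "b\<^sup>2 * (1 - a)\<^sup>2 * d0 \<le> q\<^sup>2 * D"
  proof -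
    have "(b * (1 - a))\<^sup>2 \<le> q\<^sup>2" using qlow b1 a1 by (intro power_mono) auto
    then have "b\<^sup>2 * (1 - a)\<^sup>2 \<le> q\<^sup>2" by (simp add: power_mult_distrib)
    then show ?thesis using Dd0 d0pos by (intro mult_mono) auto
  qed
  have dBlow: "dB \<ge> b\<^sup>2 * (1 - a)\<^sup>2 * d0 / 2" using dB_D t1 t2 t3 q2D C2 by linarith
  have dB0: "0 \<le> dB"
  proof -
    have "0 \<le> b\<^sup>2 * (1 - a)\<^sup>2 * d0 / 2" using d0pos by simp
    then show ?thesis using dBlow by linarith
  qed
  have dBup: "dB \<le> b\<^sup>2 + G + M"
  proof -
    have "q\<^sup>2 * D \<le> q\<^sup>2 * 1" using D1 by (intro mult_left_mono) auto
    moreover have "q\<^sup>2 \<le> b\<^sup>2" using qb q0 by (intro power_mono) auto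
    moreover have "r\<^sup>2 * G * sqrt D \<le> 1 * G * 1" using r21 sq1 G0 D0 by (intro mult_mono) auto
    moreover have "0 \<le> r\<^sup>2 * B\<^sup>2 / D" using D0 by simp
    ultimately show ?thesis using dB_D t2 by linarith
  qed
  have main: "dB * H \<ge> b^3 * (1 - a)\<^sup>2 * d0 / (8 * r)"
  proof -
    have "dB * H \<ge> (b\<^sup>2 * (1 - a)\<^sup>2 * d0 / 2) * (b / (4 * r))" using dBlow Hlow d0pos b1 r0 dB0
      by (intro mult_mono) auto
    moreover have "(b\<^sup>2 * (1 - a)\<^sup>2 * d0 / 2) * (b / (4 * r)) = (b\<^sup>2 * b) * (1 - a)\<^sup>2 * d0 / (8 * r)"
      using r0 by (simp add: field_simps)
    moreover have "b\<^sup>2 * b = b ^ 3" by (simp add: power2_eq_square power3_eq_cube)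
    ultimately show ?thesis by metis
  qed
  define X where "X = dN * B + lam * ((ps + ch) * B - (N * ph + lam * (ph\<^sup>2 - Ph) + et))"
  have Pq: "P = - b * q * B / r" using h0 q0 r0 by (simp add: field_simps)
  have kdec: "k = dB * H + X / q - b * B\<^sup>2 / r ^ 3 - b\<^sup>2 * B\<^sup>2 / (r\<^sup>2 * q)"
  proof -
    have "dP = X + (N + lam * ph) * dB" unfolding dP_def X_def by (simp add: algebra_simps)
    moreover have "P * P / q ^ 3 = b\<^sup>2 * B\<^sup>2 / (r\<^sup>2 * q)" unfolding Pq using q0 r0
      by (simp add: field_simps power2_eq_square power3_eq_cube)
    ultimately show ?thesis unfolding k_def H_def using q0 r0
      by (simp add: field_simps power2_eq_square power3_eq_cube)
  qed
  have T2: "b * B\<^sup>2 / r ^ 3 \<le> 16 * M\<^sup>2 / r"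
  proof -
    have "b * B\<^sup>2 / r ^ 3 \<le> b * (r\<^sup>2 * \<beta>\<^sup>2) / r ^ 3" using B2r b1 r0
      by (intro divide_right_mono mult_left_mono) auto
    also have "\<dots> = (\<beta> * b) * \<beta> / r" using r0 by (simp add: field_simps power2_eq_square power3_eq_cube)
    also have "\<dots> = 4 * M * \<beta> / r" using beb by simp
    also have "\<dots> \<le> 4 * M * (4 * M) / r" using be4 M0 r0 by (intro divide_right_mono mult_left_mono) auto
    finally show ?thesis by (simp add: power2_eq_square)
  qed
  have T3: "b\<^sup>2 * B\<^sup>2 / (r\<^sup>2 * q) \<le> 16 * M\<^sup>2 / ((1 - a) * r)"
  proof -
    have "b\<^sup>2 * B\<^sup>2 / (r\<^sup>2 * q) \<le> b\<^sup>2 * (r\<^sup>2 * \<beta>\<^sup>2) / (r\<^sup>2 * q)" using B2r r0 q0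
      by (intro divide_right_mono mult_left_mono) auto
    also have "\<dots> = (b\<^sup>2 * \<beta>\<^sup>2) / q" using r0 by simp
    also have "\<dots> = 16 * M\<^sup>2 / q" using bebsq by simp
    also have "\<dots> \<le> 16 * M\<^sup>2 / (b * (1 - a))" using qlow b1 a1 M0 q0 by (intro divide_left_mono) auto
    also have "\<dots> \<le> 16 * M\<^sup>2 / (1 * (1 - a))" using b1 a1 M0 by (intro divide_left_mono mult_right_mono) auto
    also have "\<dots> \<le> 16 * M\<^sup>2 / ((1 - a) * r)" using r0 r1 a1 M0
      by (intro divide_left_mono) (auto simp: mult_left_le_one_le)
    finally show ?thesis .
  qed
  have dN_D: "dN = - G * B / sqrt D - (2 * B * dB * D + 2 * B ^ 3) / D\<^sup>2 - 2 * P"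
    using dN_def D_def by simp
  have dNB: "dN * B = - (G * B\<^sup>2 / sqrt D) - 2 * B\<^sup>2 * dB / D - 2 * (B\<^sup>2)\<^sup>2 / D\<^sup>2 + 2 * b * q * B\<^sup>2 / r"
    unfolding dN_D Pq using D0 r0 by (simp add: field_simps power2_eq_square power3_eq_cube)
  have e1: "G * B\<^sup>2 / sqrt D \<le> 16 * G * M\<^sup>2 / d0"
  proof -
    have "G * B\<^sup>2 \<le> G * (16 * M\<^sup>2)" using B16 G0 by (intro mult_left_mono) auto
    then have "G * B\<^sup>2 / sqrt D \<le> G * (16 * M\<^sup>2) / d0" using sqd0 d0pos G0 by (intro frac_le) auto
    then show ?thesis by (simp add: algebra_simps)
  qed
  have e2: "2 * B\<^sup>2 * dB / D \<le> 32 * M\<^sup>2 * (1 + G + M) / d0"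
  proof -
    have "B\<^sup>2 * dB \<le> \<beta>\<^sup>2 * (b\<^sup>2 + G + M)" using B2be dBup dB0 by (intro mult_mono) auto
    also have "\<dots> = b\<^sup>2 * \<beta>\<^sup>2 + \<beta>\<^sup>2 * (G + M)" by (simp add: algebra_simps)
    also have "\<dots> \<le> 16 * M\<^sup>2 + 16 * M\<^sup>2 * (G + M)" using bebsq be16 G0 M0
      by (intro add_mono mult_right_mono) auto
    finally have "2 * (B\<^sup>2 * dB) \<le> 32 * M\<^sup>2 * (1 + G + M)" by (simp add: algebra_simps)
    then have "2 * (B\<^sup>2 * dB) / D \<le> 32 * M\<^sup>2 * (1 + G + M) / d0" using Dd0 d0pos dB0 G0 M0
      by (intro frac_le) auto
    then show ?thesis by (simp add: mult.assoc)
  qed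
  have e3: "2 * (B\<^sup>2)\<^sup>2 / D\<^sup>2 \<le> 512 * M ^ 4 / d0\<^sup>2"
  proof -
    have "(B\<^sup>2)\<^sup>2 \<le> (16 * M\<^sup>2)\<^sup>2" using B16 by (intro power_mono) auto
    then have "2 * (B\<^sup>2)\<^sup>2 \<le> 512 * M ^ 4" by (simp add: power_mult_distrib power2_eq_square numeral_eq_Suc mult.assoc)
    moreover have "d0\<^sup>2 \<le> D\<^sup>2" using Dd0 d0pos by (intro power_mono) auto
    ultimately show ?thesis using d0pos by (intro frac_le) auto
  qed
  have e4: "0 \<le> 2 * b * q * B\<^sup>2 / r" using b1 q0 r0 by simp
  have e5: "\<bar>lam * ((ps + ch) * B)\<bar> \<le> 4 * M\<^sup>2 + 4 * M * M1"
  proof -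
    have "\<bar>ps + ch\<bar> \<le> b * M + M1"
    proof -
      have "q * M \<le> b * M" using qb M0 by (intro mult_right_mono) auto
      moreover have "r * M1 \<le> 1 * M1" using r1 M10 by (intro mult_right_mono) auto
      ultimately show ?thesis using psb chb by linarith
    qed
    then have "\<bar>ps + ch\<bar> * \<bar>B\<bar> \<le> (b * M + M1) * \<beta>" using Bbe by (intro mult_mono) auto
    also have "\<dots> = M * (\<beta> * b) + M1 * \<beta>" by (simp add: algebra_simps)
    also have "\<dots> \<le> M * (4 * M) + M1 * (4 * M)" using beb be4 M10 M0 by (intro add_mono mult_left_mono) auto
    finally have 1: "\<bar>ps + ch\<bar> * \<bar>B\<bar> \<le> 4 * M\<^sup>2 + 4 * M * M1" by (simp add: power2_eq_square algebra_simps)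
    have "\<bar>lam * ((ps + ch) * B)\<bar> = lam * (\<bar>ps + ch\<bar> * \<bar>B\<bar>)" using l0 by (simp add: abs_mult)
    also have "\<dots> \<le> 1 * (\<bar>ps + ch\<bar> * \<bar>B\<bar>)" using l1 by (intro mult_right_mono) auto
    finally show ?thesis using 1 by linarith
  qed
  have Nabs: "\<bar>N\<bar> \<le> G + 16 * M\<^sup>2 / d0 + b\<^sup>2"
  proof -
    have "\<bar>G * sqrt D\<bar> \<le> G" using G0 sq1 D0 by (simp add: abs_mult mult_left_le)
    moreover have "B\<^sup>2 / D \<le> 16 * M\<^sup>2 / d0" using B16 Dd0 d0pos by (intro frac_le) auto
    moreover have "0 \<le> B\<^sup>2 / D" using D0 by simp
    moreover have "q\<^sup>2 \<le> b\<^sup>2" using qb q0 by (intro power_mono) auto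
    ultimately show ?thesis using N_D by (smt (verit) zero_le_power2)
  qed
  have e6: "\<bar>lam * (N * ph + lam * (ph\<^sup>2 - Ph) + et)\<bar> \<le> (G + 16 * M\<^sup>2 / d0) * M + b\<^sup>2 * M + M\<^sup>2 + b * M1"
  proof -
    have phM: "\<bar>ph\<bar> \<le> M" using phb r1 r0 M0 by (smt (verit) mult_left_le_one_le)
    have 1: "\<bar>N * ph\<bar> \<le> (G + 16 * M\<^sup>2 / d0 + b\<^sup>2) * M" unfolding abs_mult using Nabs phM
      by (intro mult_mono) auto
    have "ph\<^sup>2 \<le> M\<^sup>2" using phM by (metis abs_ge_zero power2_abs power_mono)
    then have 2: "\<bar>lam * (ph\<^sup>2 - Ph)\<bar> \<le> M\<^sup>2" using Ph0 PhM l0 l1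
      by (simp add: abs_mult) (smt (verit) mult_left_le_one_le zero_le_power2)
    have 3: "\<bar>et\<bar> \<le> b * M1" using etb qb M10 by (smt (verit) mult_right_mono)
    have "\<bar>N * ph + lam * (ph\<^sup>2 - Ph) + et\<bar> \<le> (G + 16 * M\<^sup>2 / d0 + b\<^sup>2) * M + M\<^sup>2 + b * M1"
      using 1 2 3 by linarith
    moreover have "\<bar>lam * (N * ph + lam * (ph\<^sup>2 - Ph) + et)\<bar> \<le> \<bar>N * ph + lam * (ph\<^sup>2 - Ph) + et\<bar>"
      using l0 l1 by (simp add: abs_mult mult_left_le_one_le)
    ultimately show ?thesis by (simp add: algebra_simps)
  qed
  have E20: "0 \<le> E2" unfolding E2_def using G0 M0 M10 d0pos by simp
  have Xlow: "X \<ge> - (E2 + b\<^sup>2 * M + b * M1)"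
  proof -
    have "X = dN * B + lam * ((ps + ch) * B) - lam * (N * ph + lam * (ph\<^sup>2 - Ph) + et)"
      unfolding X_def by (simp add: algebra_simps)
    moreover have "- (lam * ((ps + ch) * B)) \<le> 4 * M\<^sup>2 + 4 * M * M1" using e5 by (rule abs_le_D2)
    moreover have "lam * (N * ph + lam * (ph\<^sup>2 - Ph) + et) \<le> (G + 16 * M\<^sup>2 / d0) * M + b\<^sup>2 * M + M\<^sup>2 + b * M1" using e6 by (rule abs_le_D1)
    ultimately have "X \<ge> - (16 * G * M\<^sup>2 / d0) - (32 * M\<^sup>2 * (1 + G + M) / d0) - (512 * M ^ 4 / d0\<^sup>2)
       - (4 * M\<^sup>2 + 4 * M * M1) - ((G + 16 * M\<^sup>2 / d0) * M + b\<^sup>2 * M + M\<^sup>2 + b * M1)"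
      using dNB e1 e2 e3 e4 by linarith
    then show ?thesis using E2_def by linarith
  qed
  have Xq: "X / q \<ge> - (b * (E2 + M + M1) / ((1 - a) * r))"
  proof -
    have n0: "0 \<le> E2 + b\<^sup>2 * M + b * M1" using E20 M0 M10 b1 by simp
    have "(E2 + b\<^sup>2 * M + b * M1) / q \<le> (E2 + b\<^sup>2 * M + b * M1) / (b * (1 - a))"
      using n0 qlow b1 a1 q0 by (intro divide_left_mono) auto
    also have "\<dots> = (E2 / b + b * M + M1) / (1 - a)"
    proof -
      have "(E2 + b\<^sup>2 * M + b * M1) / b = E2 / b + b * M + M1" using b1 by (simp add: add_divide_distrib power2_eq_square)
      then show ?thesis by (metis divide_divide_eq_left mult.commute)
    qed
    also have "\<dots> \<le> (b * (E2 + M + M1)) / (1 - a)"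
    proof -
      have "E2 / b \<le> E2 / 1" using E20 b1 by (intro divide_left_mono) auto
      moreover have "E2 \<le> b * E2" "M1 \<le> b * M1" using E20 M10 b1 by (simp_all add: mult_le_cancel_right1)
      ultimately have "E2 / b + b * M + M1 \<le> b * (E2 + M + M1)" by (simp add: algebra_simps)
      then show ?thesis using a1 by (intro divide_right_mono) auto
    qed
    also have "\<dots> \<le> (b * (E2 + M + M1)) / ((1 - a) * r)"
      using r0 r1 a1 E20 M0 M10 b1 by (intro divide_left_mono) (auto simp: mult_left_le_one_le)
    finally have "(E2 + b\<^sup>2 * M + b * M1) / q \<le> b * (E2 + M + M1) / ((1 - a) * r)" .
    moreover have "X / q \<ge> - (E2 + b\<^sup>2 * M + b * M1) / q" using Xlow q0 by (intro divide_right_mono) auto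
    moreover have "- (E2 + b\<^sup>2 * M + b * M1) / q = - ((E2 + b\<^sup>2 * M + b * M1) / q)" by (simp only: minus_divide_left)
    ultimately show ?thesis by linarith
  qed
  define Z where "Z = b^3 * (1 - a)\<^sup>2 * d0 / 8 - 16 * M\<^sup>2 - 16 * M\<^sup>2 / (1 - a) - b * (E2 + M + M1) / (1 - a)"
  have kZ: "k \<ge> Z / r"
  proof -
    have "Z / r = b^3 * (1 - a)\<^sup>2 * d0 / (8 * r) - 16 * M\<^sup>2 / r - 16 * M\<^sup>2 / ((1 - a) * r) - b * (E2 + M + M1) / ((1 - a) * r)"
      unfolding Z_def diff_divide_distrib divide_divide_eq_left by (simp add: mult.commute)
    then show ?thesis using kdec main T2 T3 Xq by linarith
  qed
  have Zpos: "0 < Z"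
  proof -
    have "b * E3 < b * (b\<^sup>2 * (1 - a)\<^sup>2 * d0 / 8)" using C3 b1 by simp
    also have "\<dots> = b^3 * (1 - a)\<^sup>2 * d0 / 8" by (simp add: power2_eq_square power3_eq_cube)
    finally have 1: "b * E3 < b^3 * (1 - a)\<^sup>2 * d0 / 8" .
    have "16 * M\<^sup>2 \<le> b * (16 * M\<^sup>2)" using b1 M0 by (simp add: mult_le_cancel_right1)
    moreover have "16 * M\<^sup>2 / (1 - a) \<le> b * (16 * M\<^sup>2 / (1 - a))"
    proof -
      have "0 \<le> 16 * M\<^sup>2 / (1 - a)" using a1 by simp
      from mult_right_mono[OF b1 this] show ?thesis by simp
    qed
    moreover have "b * E3 = b * (16 * M\<^sup>2) + b * (16 * M\<^sup>2 / (1 - a)) + b * (E2 + M + M1) / (1 - a)"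
      unfolding E3_def add_divide_distrib distrib_left by simp
    ultimately show ?thesis using 1 unfolding Z_def by linarith
  qed
  show ?thesis using kZ Zpos r0 by (smt (verit) divide_pos_pos)
qed

lemma h_deriv:
  fixes A B C ph ps :: "real \<Rightarrow> real" and r q G lam b dB P0 N0 dph dps dN dP :: real
  assumes dA: "(A has_real_derivative 2 * B 0) (at 0)"
    and dBd: "(B has_real_derivative dB) (at 0)"
    and dC: "(C has_real_derivative 2 * P0) (at 0)"
    and dph: "(ph has_real_derivative dph) (at 0)"
    and dps: "(ps has_real_derivative dps) (at 0)"
    and A0: "A 0 = r\<^sup>2" and C0: "C 0 = q\<^sup>2" and r0: "0 < r" and q0: "0 < q" and r1: "r < 1"
    and N0: "N0 = G * sqrt (1 - r\<^sup>2) - (B 0)\<^sup>2 / (1 - r\<^sup>2) - q\<^sup>2"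
    and P0: "P0 = N0 * B 0 + lam * (ph 0 * B 0 - ps 0)"
    and dN: "dN = - G * B 0 / sqrt (1 - r\<^sup>2) - (2 * B 0 * dB * (1 - r\<^sup>2) + 2 * B 0 ^ 3) / (1 - r\<^sup>2)\<^sup>2 - 2 * P0"
    and dP: "dP = dN * B 0 + N0 * dB + lam * (dph * B 0 + ph 0 * dB - dps)"
  shows "((\<lambda>s. b * B s / sqrt (A s) + ((G * sqrt (1 - A s) - (B s)\<^sup>2 / (1 - A s) - C s) * B s
            + lam * (ph s * B s - ps s)) / sqrt (C s))
         has_real_derivative b * (dB / r - B 0 * B 0 / r ^ 3) + dP / q - P0 * P0 / q ^ 3) (at 0)"
proof -
  have r2: "r\<^sup>2 < 1" using r0 r1 by (simp add: power_less_one_iff abs_less_iff)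
  have sA: "sqrt (A 0) = r" using A0 r0 by simp
  have sC: "sqrt (C 0) = q" using C0 q0 by simp
  have dsA: "((\<lambda>s. sqrt (A s)) has_real_derivative B 0 / r) (at 0)"
    using DERIV_chain2[OF DERIV_real_sqrt dA] A0 r0 sA by (simp add: field_simps)
  have dsC: "((\<lambda>s. sqrt (C s)) has_real_derivative P0 / q) (at 0)"
    using DERIV_chain2[OF DERIV_real_sqrt dC] C0 q0 sC by (simp add: field_simps)
  have d1: "((\<lambda>s. B s / sqrt (A s)) has_real_derivative dB / r - B 0 * B 0 / r ^ 3) (at 0)"
    using DERIV_divide[OF dBd dsA] sA r0
    by (rule_tac DERIV_cong) (auto simp: field_simps power2_eq_square power3_eq_cube)
  have d1A: "((\<lambda>s. 1 - A s) has_real_derivative - (2 * B 0)) (at 0)"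
    using DERIV_diff[OF DERIV_const dA] by simp
  have s1A: "sqrt (1 - A 0) = sqrt (1 - r\<^sup>2)" using A0 by simp
  have s1Ap: "0 < sqrt (1 - r\<^sup>2)" using r2 by simp
  have dsq: "((\<lambda>s. sqrt (1 - A s)) has_real_derivative - B 0 / sqrt (1 - r\<^sup>2)) (at 0)"
    using DERIV_chain2[OF DERIV_real_sqrt d1A] A0 r2 s1Ap by (simp add: field_simps)
  have dB2: "((\<lambda>s. (B s)\<^sup>2) has_real_derivative 2 * B 0 * dB) (at 0)"
    using DERIV_mult[OF dBd dBd] by (simp add: power2_eq_square algebra_simps)
  have dq: "((\<lambda>s. (B s)\<^sup>2 / (1 - A s)) has_real_derivative (2 * B 0 * dB * (1 - r\<^sup>2) + 2 * B 0 ^ 3) / (1 - r\<^sup>2)\<^sup>2) (at 0)"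
    using DERIV_divide[OF dB2 d1A] A0 r2
    by (rule_tac DERIV_cong) (auto simp: field_simps power2_eq_square power3_eq_cube)
  have d2: "((\<lambda>s. G * sqrt (1 - A s) - (B s)\<^sup>2 / (1 - A s) - C s) has_real_derivative dN) (at 0)"
    using DERIV_diff[OF DERIV_diff[OF DERIV_cmult[OF dsq, of G] dq] dC] unfolding dN
    by (rule_tac DERIV_cong) (auto simp: field_simps)
  have N00: "G * sqrt (1 - A 0) - (B 0)\<^sup>2 / (1 - A 0) - C 0 = N0" using N0 A0 C0 by simp
  have d3: "((\<lambda>s. (G * sqrt (1 - A s) - (B s)\<^sup>2 / (1 - A s) - C s) * B s + lam * (ph s * B s - ps s))
      has_real_derivative dP) (at 0)"
    using DERIV_add[OF DERIV_mult[OF d2 dBd] DERIV_cmult[OF DERIV_diff[OF DERIV_mult[OF dph dBd] dps], of lam]]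
    unfolding N00 dP by (rule_tac DERIV_cong) (auto simp: algebra_simps)
  have P00: "(G * sqrt (1 - A 0) - (B 0)\<^sup>2 / (1 - A 0) - C 0) * B 0 + lam * (ph 0 * B 0 - ps 0) = P0"
    using N00 P0 by simp
  have d4: "((\<lambda>s. ((G * sqrt (1 - A s) - (B s)\<^sup>2 / (1 - A s) - C s) * B s + lam * (ph s * B s - ps s)) / sqrt (C s))
      has_real_derivative dP / q - P0 * P0 / q ^ 3) (at 0)"
    using DERIV_divide[OF d3 dsC] unfolding P00 sC using q0
    by (rule_tac DERIV_cong) (auto simp: field_simps power2_eq_square power3_eq_cube)
  show ?thesis
    using DERIV_add[OF DERIV_cmult[OF d1, of b] d4] by (simp add: algebra_simps)
qed

lemma inner_deriv:
  fixes X Y :: "real \<Rightarrow> 'a::real_inner"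
  assumes "(X has_vector_derivative dX) (at s)" "(Y has_vector_derivative dY) (at s)"
  shows "((\<lambda>s. X s \<bullet> Y s) has_real_derivative X s \<bullet> dY + dX \<bullet> Y s) (at s)"
proof -
  have "((\<lambda>s. X s \<bullet> Y s) has_derivative (\<lambda>h. X s \<bullet> (h *\<^sub>R dY) + (h *\<^sub>R dX) \<bullet> Y s)) (at s)"
    using has_derivative_inner[OF assms(1)[unfolded has_vector_derivative_def] assms(2)[unfolded has_vector_derivative_def]] .
  moreover have "(\<lambda>h. X s \<bullet> (h *\<^sub>R dY) + (h *\<^sub>R dX) \<bullet> Y s) = (*) (X s \<bullet> dY + dX \<bullet> Y s)"
    by (simp add: fun_eq_iff algebra_simps)
  ultimately show ?thesis by (simp add: has_field_derivative_def)
qed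

lemma fld_inner:
  "p \<bullet> fld G F lam t x p' = (G * sqrt (1 - x \<bullet> x) - (x \<bullet> p')\<^sup>2 / (1 - x \<bullet> x) - p' \<bullet> p') * (p \<bullet> x)
     + lam * ((x \<bullet> F t) * (p \<bullet> x) - p \<bullet> F t)"
  by (simp add: fld_def inner_add_right inner_diff_right power2_norm_eq_inner algebra_simps)


lemma case_pos:
  fixes X Pp F F' :: "real \<Rightarrow> real^2" and \<tau> :: "real \<Rightarrow> real"
    and a b G lam M M1 \<epsilon> d0 E2 E3 :: real
  assumes e0: "0 < \<epsilon>"
    and Xd: "\<And>s. \<bar>s\<bar> < \<epsilon> \<Longrightarrow> (X has_vector_derivative Pp s) (at s)"
    and Pd: "\<And>s. \<bar>s\<bar> < \<epsilon> \<Longrightarrow> (Pp has_vector_derivative fld G F lam (\<tau> s) (X s) (Pp s)) (at s)"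
    and td: "\<And>s. \<bar>s\<bar> < \<epsilon> \<Longrightarrow> (\<tau> has_real_derivative 1) (at s)"
    and FD: "\<And>t. (F has_vector_derivative F' t) (at t)"
    and FM: "\<And>t. norm (F t) \<le> M" and F1M: "\<And>t. norm (F' t) \<le> M1"
    and inE: "\<And>s. \<bar>s\<bar> < \<epsilon> \<Longrightarrow> norm (X s) \<le> a \<and> b * norm (X s) + norm (Pp s) \<le> b"
    and X0: "X 0 \<noteq> 0" and bd: "b * norm (X 0) + norm (Pp 0) = b"
    and a1: "a < 1" and b1: "1 \<le> b" and G0: "0 < G" and l0: "0 \<le> lam" and l1: "lam \<le> 1"
    and d0_def: "d0 = 1 - a\<^sup>2"
    and E2_def: "E2 = 16*G*M\<^sup>2/d0 + 32*M\<^sup>2*(1+G+M)/d0 + 512*M^4/d0\<^sup>2 + 4*M\<^sup>2 + 4*M*M1 + (G + 16*M\<^sup>2/d0)*M + M\<^sup>2"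
    and E3_def: "E3 = 16*M\<^sup>2 + (16*M\<^sup>2 + E2 + M + M1)/(1-a)"
    and C1: "4 * M \<le> b\<^sup>2 * (1 - a)"
    and C2: "16*M\<^sup>2/d0 + M \<le> b\<^sup>2 * (1-a)\<^sup>2 * d0 / 2"
    and C3: "E3 < b\<^sup>2 * (1-a)\<^sup>2 * d0 / 8"
  shows False
proof -
  define r where "r = norm (X 0)"
  define q where "q = norm (Pp 0)"
  have M0: "0 \<le> M" using FM[of 0] by (meson norm_ge_zero order_trans)
  have M10: "0 \<le> M1" using F1M[of 0] by (meson norm_ge_zero order_trans)
  have r0: "0 < r" using X0 r_def by simp
  have ra: "r \<le> a" using inE[of 0] e0 r_def by simp
  have r1: "r < 1" using ra a1 by simp
  have q_def': "q = b * (1 - r)" using bd r_def q_def by (simp add: algebra_simps)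
  have q0: "0 < q" using q_def' b1 r1 by simp
  have P0ne: "Pp 0 \<noteq> 0" using q0 q_def by auto
  obtain \<delta>1 where d1: "\<delta>1 > 0" "\<And>s. dist 0 s < \<delta>1 \<Longrightarrow> X s \<noteq> 0"
    using continuous_at_avoid[OF has_vector_derivative_continuous[OF Xd[of 0]] X0] e0 by auto
  obtain \<delta>2 where d2: "\<delta>2 > 0" "\<And>s. dist 0 s < \<delta>2 \<Longrightarrow> Pp s \<noteq> 0"
    using continuous_at_avoid[OF has_vector_derivative_continuous[OF Pd[of 0]] P0ne] e0 by auto
  define \<epsilon>' where "\<epsilon>' = min \<epsilon> (min \<delta>1 \<delta>2)"
  have e'0: "0 < \<epsilon>'" using e0 d1 d2 \<epsilon>'_def by simp
  define A where "A s = X s \<bullet> X s" for s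
  define B where "B s = X s \<bullet> Pp s" for s
  define C where "C s = Pp s \<bullet> Pp s" for s
  define ph where "ph s = X s \<bullet> F (\<tau> s)" for s
  define ps where "ps s = Pp s \<bullet> F (\<tau> s)" for s
  define Nf where "Nf s = G * sqrt (1 - A s) - (B s)\<^sup>2 / (1 - A s) - C s" for s
  define Pf where "Pf s = Nf s * B s + lam * (ph s * B s - ps s)" for s
  define hh where "hh s = b * B s / sqrt (A s) + ((G * sqrt (1 - A s) - (B s)\<^sup>2 / (1 - A s) - C s) * B s
            + lam * (ph s * B s - ps s)) / sqrt (C s)" for s
  define g where "g s = b * sqrt (A s) + sqrt (C s) - b" for s
  have Pfld: "Pp s \<bullet> fld G F lam (\<tau> s) (X s) (Pp s) = Pf s" for s
    unfolding Pf_def Nf_def fld_inner A_def B_def C_def ph_def ps_def by (simp add: inner_commute)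
  have Xfld: "X s \<bullet> fld G F lam (\<tau> s) (X s) (Pp s) = Nf s * A s + lam * (ph s * A s - ph s)" for s
    unfolding Nf_def fld_inner A_def B_def C_def ph_def by (simp add: inner_commute)
  have Ffld: "fld G F lam (\<tau> s) (X s) (Pp s) \<bullet> F (\<tau> s) = Nf s * ph s + lam * ((ph s)\<^sup>2 - F (\<tau> s) \<bullet> F (\<tau> s))" for s
  proof -
    have nn: "\<And>x::real^2. norm x * norm x = x \<bullet> x" by (simp add: power2_norm_eq_inner[symmetric] power2_eq_square)
    show ?thesis unfolding Nf_def A_def B_def C_def ph_def
      by (simp add: fld_def inner_add_left inner_diff_left power2_norm_eq_inner power2_eq_square algebra_simps nn)
  qed
  have dA: "(A has_real_derivative 2 * B s) (at s)" if "\<bar>s\<bar> < \<epsilon>" for s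
    using inner_deriv[OF Xd[OF that] Xd[OF that]] unfolding A_def B_def by (simp add: inner_commute)
  have dC: "(C has_real_derivative 2 * Pf s) (at s)" if "\<bar>s\<bar> < \<epsilon>" for s
    using inner_deriv[OF Pd[OF that] Pd[OF that]] Pfld[of s] unfolding C_def by (simp add: inner_commute)
  have dFt: "((\<lambda>s. F (\<tau> s)) has_vector_derivative F' (\<tau> s)) (at s)" if "\<bar>s\<bar> < \<epsilon>" for s
    using vector_diff_chain_at[OF td[OF that, unfolded has_real_derivative_iff_has_vector_derivative] FD]
    by (simp add: o_def)
  have A1: "A s < 1" if "\<bar>s\<bar> < \<epsilon>" for s
  proof -
    have "norm (X s) < 1" using inE[OF that] a1 by simp
    then have "(norm (X s))\<^sup>2 < 1" by (simp add: power_less_one_iff abs_less_iff)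
    then show ?thesis by (simp add: A_def power2_norm_eq_inner)
  qed
  have gd: "(g has_real_derivative hh s) (at s)" if "\<bar>s\<bar> < \<epsilon>'" for s
  proof -
    have se: "\<bar>s\<bar> < \<epsilon>" using that \<epsilon>'_def by simp
    have Xs: "X s \<noteq> 0" using d1(2)[of s] that \<epsilon>'_def by (simp add: dist_real_def)
    have Ps: "Pp s \<noteq> 0" using d2(2)[of s] that \<epsilon>'_def by (simp add: dist_real_def)
    have Ap: "0 < A s" using Xs by (simp add: A_def)
    have Cp: "0 < C s" using Ps by (simp add: C_def)
    have 1: "((\<lambda>s. sqrt (A s)) has_real_derivative B s / sqrt (A s)) (at s)"
      using DERIV_chain2[OF DERIV_real_sqrt[OF Ap] dA[OF se]] Ap by (simp add: field_simps)
    have 2: "((\<lambda>s. sqrt (C s)) has_real_derivative Pf s / sqrt (C s)) (at s)"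
      using DERIV_chain2[OF DERIV_real_sqrt[OF Cp] dC[OF se]] Cp by (simp add: field_simps)
    show ?thesis
      using DERIV_diff[OF DERIV_add[OF DERIV_cmult[OF 1, of b] 2] DERIV_const[of b]]
      unfolding g_def hh_def Pf_def Nf_def by (simp add: field_simps)
  qed
  have gle: "g s \<le> g 0" if "\<bar>s\<bar> < \<epsilon>'" for s
  proof -
    have "\<bar>s\<bar> < \<epsilon>" using that \<epsilon>'_def by simp
    then have "g s \<le> 0" using inE unfolding g_def A_def C_def by (simp add: norm_eq_sqrt_inner[symmetric])
    moreover have "g 0 = 0" using bd unfolding g_def A_def C_def by (simp add: norm_eq_sqrt_inner[symmetric])
    ultimately show ?thesis by simp
  qed
  have e00: "\<bar>0::real\<bar> < \<epsilon>" using e0 by simp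
  define x0 where "x0 = X 0"
  define p0 where "p0 = Pp 0"
  define f0 where "f0 = fld G F lam (\<tau> 0) (X 0) (Pp 0)"
  define dBv where "dBv = x0 \<bullet> f0 + p0 \<bullet> p0"
  define ch where "ch = x0 \<bullet> F' (\<tau> 0)"
  define et where "et = p0 \<bullet> F' (\<tau> 0)"
  define Ph where "Ph = F (\<tau> 0) \<bullet> F (\<tau> 0)"
  define dN where "dN = - G * B 0 / sqrt (1 - r\<^sup>2) - (2 * B 0 * dBv * (1 - r\<^sup>2) + 2 * B 0 ^ 3) / (1 - r\<^sup>2)\<^sup>2 - 2 * Pf 0"
  define dP where "dP = dN * B 0 + Nf 0 * dBv + lam * ((ps 0 + ch) * B 0 + ph 0 * dBv - (Nf 0 * ph 0 + lam * ((ph 0)\<^sup>2 - Ph) + et))"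
  define k where "k = b * (dBv / r - B 0 * B 0 / r ^ 3) + dP / q - Pf 0 * Pf 0 / q ^ 3"
  have A0: "A 0 = r\<^sup>2" by (simp add: A_def r_def power2_norm_eq_inner)
  have C0: "C 0 = q\<^sup>2" by (simp add: C_def q_def power2_norm_eq_inner)
  have N0: "Nf 0 = G * sqrt (1 - r\<^sup>2) - (B 0)\<^sup>2 / (1 - r\<^sup>2) - q\<^sup>2" using A0 C0 by (simp add: Nf_def)
  have dBd: "(B has_real_derivative dBv) (at 0)"
    using inner_deriv[OF Xd[OF e00] Pd[OF e00]] unfolding B_def dBv_def x0_def p0_def f0_def by simp
  have dph: "(ph has_real_derivative ps 0 + ch) (at 0)"
    using inner_deriv[OF Xd[OF e00] dFt[OF e00]] unfolding ph_def ps_def ch_def x0_def by (simp add: add.commute)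
  have dps: "(ps has_real_derivative Nf 0 * ph 0 + lam * ((ph 0)\<^sup>2 - Ph) + et) (at 0)"
    using inner_deriv[OF Pd[OF e00] dFt[OF e00]] Ffld[of 0] unfolding ps_def et_def p0_def Ph_def by (simp add: add.commute)
  have hd: "(hh has_real_derivative k) (at 0)"
    unfolding hh_def k_def
    by (rule h_deriv[OF dA[OF e00, simplified] dBd dC[OF e00] dph dps A0 C0 r0 q0 r1 N0 Pf_def[of 0] dN_def dP_def])
  have hh0: "hh 0 = 0"
    using DERIV_local_max[OF gd[of 0] e'0] gle e'0 by (simp add: abs_minus_commute)
  have sA0: "sqrt (A 0) = r" using A0 r0 by simp
  have sC0: "sqrt (C 0) = q" using C0 q0 by simp
  have h0: "b * B 0 / r + Pf 0 / q = 0" using hh0 unfolding hh_def sA0 sC0 Pf_def Nf_def .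
  have dB_eq: "dBv = q\<^sup>2 + Nf 0 * r\<^sup>2 + lam * ph 0 * (r\<^sup>2 - 1)"
    using Xfld[of 0] A0 C0 unfolding dBv_def x0_def f0_def p0_def C_def by (simp add: algebra_simps)
  have Bb: "\<bar>B 0\<bar> \<le> r * q" using Cauchy_Schwarz_ineq2[of "X 0" "Pp 0"] by (simp add: B_def r_def q_def)
  have phb: "\<bar>ph 0\<bar> \<le> r * M"
    using Cauchy_Schwarz_ineq2[of "X 0" "F (\<tau> 0)"] FM[of "\<tau> 0"] r0
    by (simp add: ph_def r_def) (meson mult_left_mono norm_ge_zero order_trans)
  have psb: "\<bar>ps 0\<bar> \<le> q * M"
    using Cauchy_Schwarz_ineq2[of "Pp 0" "F (\<tau> 0)"] FM[of "\<tau> 0"] q0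
    by (simp add: ps_def q_def) (meson mult_left_mono norm_ge_zero order_trans)
  have chb: "\<bar>ch\<bar> \<le> r * M1"
    using Cauchy_Schwarz_ineq2[of "X 0" "F' (\<tau> 0)"] F1M[of "\<tau> 0"] r0
    by (simp add: ch_def x0_def r_def) (meson mult_left_mono norm_ge_zero order_trans)
  have etb: "\<bar>et\<bar> \<le> q * M1"
    using Cauchy_Schwarz_ineq2[of "Pp 0" "F' (\<tau> 0)"] F1M[of "\<tau> 0"] q0
    by (simp add: et_def p0_def q_def) (meson mult_left_mono norm_ge_zero order_trans)
  have Ph0: "0 \<le> Ph" by (simp add: Ph_def)
  have PhM: "Ph \<le> M\<^sup>2"
  proof -
    have "(norm (F (\<tau> 0)))\<^sup>2 \<le> M\<^sup>2" using FM[of "\<tau> 0"] by (intro power_mono) auto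
    then show ?thesis by (simp add: Ph_def power2_norm_eq_inner)
  qed
  have k0: "0 < k"
    by (rule key_ineq[OF r0 ra a1 b1 q_def' Bb phb psb Ph0 PhM chb etb l0 l1 G0 M0 M10 N0 Pf_def[of 0]
          dB_eq dN_def dP_def k_def h0 d0_def E2_def E3_def C1 C2 C3])
  show False using no_strict_max[OF e'0 gle gd hd k0] .
qed

lemma periodic_int:
  fixes g :: "real \<Rightarrow> 'a"
  assumes per: "\<forall>t. g (t + T) = g t"
  shows "g (s + real_of_int k * T) = g s"
proof -
  have nat: "g (s + real n * T) = g s" for n :: nat and s
  proof (induction n)
    case 0 then show ?case by simp
  next
    case (Suc n)
    have "g (s + real (Suc n) * T) = g ((s + real n * T) + T)" by (simp add: algebra_simps)
    also have "\<dots> = g s" using per Suc by simp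
    finally show ?case .
  qed
  show ?thesis
  proof (cases "k \<ge> 0")
    case True
    then obtain n where "k = int n" by (metis nonneg_eq_int)
    then show ?thesis using nat by simp
  next
    case False
    then obtain n where n: "k = - int n" by (metis le_cases neg_0_le_iff_le nonneg_eq_int minus_minus)
    have "g ((s - real n * T) + real n * T) = g (s - real n * T)" using nat by blast
    then show ?thesis using n by simp
  qed
qed

lemma periodic_bounded:
  fixes g :: "real \<Rightarrow> 'a::real_normed_vector"
  assumes cont: "continuous_on UNIV g" and per: "\<forall>t. g (t + T) = g t" and T0: "0 < T"
  shows "\<exists>M. \<forall>t. norm (g t) \<le> M"
proof -
  have "compact (g ` {0..T})" using cont by (intro compact_continuous_image) (auto intro: continuous_on_subset)
  then obtain M where M: "\<forall>x\<in>g ` {0..T}. norm x \<le> M" using compact_imp_bounded bounded_iff by metis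
  have "norm (g t) \<le> M" for t
  proof -
    define k where "k = \<lfloor>t / T\<rfloor>"
    define s where "s = t - real_of_int k * T"
    have "real_of_int k \<le> t / T" "t / T < real_of_int k + 1" using k_def by linarith+
    then have "real_of_int k * T \<le> t" "t < (real_of_int k + 1) * T" using T0 by (simp_all add: field_simps)
    then have s: "s \<in> {0..T}" using s_def by (simp add: algebra_simps)
    have "g t = g (s + real_of_int k * T)" by (simp add: s_def)
    also have "\<dots> = g s" using periodic_int[OF per] .
    finally show ?thesis using M s by auto
  qed
  then show ?thesis by blast
qed

lemma deriv_periodic:
  fixes F F' :: "real \<Rightarrow> 'a::real_normed_vector"
  assumes FD: "\<forall>t. (F has_vector_derivative F' t) (at t)" and per: "\<forall>t. F (t + T) = F t"
  shows "\<forall>t. F' (t + T) = F' t"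
proof
  fix t
  have sh: "((\<lambda>s. s + T) has_vector_derivative 1) (at t)"
    using has_vector_derivative_add[OF has_vector_derivative_id has_vector_derivative_const] by simp
  have "((F \<circ> (\<lambda>s. s + T)) has_vector_derivative (1 *\<^sub>R F' (t + T))) (at t)"
    using vector_diff_chain_at[OF sh FD[rule_format, of "t + T"]] by simp
  moreover have "F \<circ> (\<lambda>s. s + T) = F" using per by (simp add: fun_eq_iff)
  ultimately have "(F has_vector_derivative F' (t + T)) (at t)" by simp
  then show "F' (t + T) = F' t" using FD vector_derivative_unique_at by blast
qed


lemma choose_b:
  fixes a M M1 G :: real
  assumes a0: "0 < a" and a1: "a < 1" and M0: "0 \<le> M" and M10: "0 \<le> M1" and G0: "0 < G"
  defines "d0 \<equiv> 1 - a\<^sup>2"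
  defines "E2 \<equiv> 16*G*M\<^sup>2/d0 + 32*M\<^sup>2*(1+G+M)/d0 + 512*M^4/d0\<^sup>2 + 4*M\<^sup>2 + 4*M*M1 + (G + 16*M\<^sup>2/d0)*M + M\<^sup>2"
  defines "E3 \<equiv> 16*M\<^sup>2 + (16*M\<^sup>2 + E2 + M + M1)/(1-a)"
  shows "\<exists>b. 1 \<le> b \<and> 4 * M \<le> b\<^sup>2 * (1 - a) \<and> 16*M\<^sup>2/d0 + M \<le> b\<^sup>2 * (1-a)\<^sup>2 * d0 / 2
           \<and> E3 < b\<^sup>2 * (1-a)\<^sup>2 * d0 / 8 \<and> M < b\<^sup>2"
proof -
  have "a\<^sup>2 < 1" using a0 a1 by (simp add: power_less_one_iff abs_less_iff)
  then have d0p: "0 < d0" using d0_def by simp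
  have d01: "d0 \<le> 1" using d0_def by simp
  define c where "c = (1 - a)\<^sup>2 * d0 / 8"
  have c0: "0 < c"
  proof -
    have "0 < (1 - a)\<^sup>2" using a1 by simp
    then show ?thesis using d0p by (simp add: c_def)
  qed
  have c1: "c \<le> 1"
  proof -
    have "(1 - a)\<^sup>2 \<le> 1" using a0 a1 by (simp add: power_le_one)
    then have "(1 - a)\<^sup>2 * d0 \<le> 1 * 1" using d01 d0p by (intro mult_mono) auto
    then show ?thesis using c_def by simp
  qed
  have E20: "0 \<le> E2" unfolding E2_def using M0 M10 G0 d0p by simp
  have E30: "0 \<le> E3" unfolding E3_def using M0 M10 E20 a1 by simp
  have nn16: "0 \<le> 16 * M\<^sup>2 / d0" using d0p by simp
  have nn4: "0 \<le> 4 * M / (1 - a)" using M0 a1 by simp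
  define K where "K = 1 + M + 4 * M / (1 - a) + 16 * M\<^sup>2 / d0 + E3"
  have K1: "1 \<le> K" using K_def M0 a1 d0p E30 by simp
  define b where "b = 1 + K / c"
  have bK: "K / c < b" using b_def by simp
  have Kc: "K \<le> K / c" using K1 c0 c1 by (simp add: le_divide_eq mult_left_le)
  have b1: "1 \<le> b" using b_def K1 c0 by simp
  have bb: "b \<le> b\<^sup>2" using b1 by (simp add: power2_eq_square)
  have bK2: "K < b\<^sup>2" using bK Kc bb by linarith
  have cb: "K < c * b\<^sup>2"
  proof -
    have "K < c * b" using bK c0 by (simp add: divide_less_eq mult.commute)
    also have "\<dots> \<le> c * b\<^sup>2" using bb c0 by simp
    finally show ?thesis .
  qed
  have C1: "4 * M \<le> b\<^sup>2 * (1 - a)"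
  proof -
    have "4 * M / (1 - a) \<le> b\<^sup>2" using bK2 K_def M0 nn16 E30 by linarith
    then show ?thesis using a1 by (simp add: divide_le_eq)
  qed
  have C2: "16*M\<^sup>2/d0 + M \<le> b\<^sup>2 * (1-a)\<^sup>2 * d0 / 2"
  proof -
    have "b\<^sup>2 * (1-a)\<^sup>2 * d0 / 2 = 4 * (c * b\<^sup>2)" by (simp add: c_def)
    moreover have "16*M\<^sup>2/d0 + M \<le> K" using K_def nn4 E30 by linarith
    ultimately show ?thesis using cb K1 by linarith
  qed
  have C3: "E3 < b\<^sup>2 * (1-a)\<^sup>2 * d0 / 8"
  proof -
    have "b\<^sup>2 * (1-a)\<^sup>2 * d0 / 8 = c * b\<^sup>2" by (simp add: c_def)
    moreover have "E3 \<le> K" using K_def M0 nn4 nn16 by linarith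
    ultimately show ?thesis using cb by linarith
  qed
  have C4: "M < b\<^sup>2" using bK2 K_def nn4 nn16 E30 M0 by linarith
  show ?thesis using b1 C1 C2 C3 C4 by blast
qed


lemma m_fun_eq: "m_fun a z = (norm (fst (snd z)))\<^sup>2 / 2 - a\<^sup>2 / 2"
  by (cases z) (simp add: m_fun_def)

theorem lemma4p2:
  fixes G T a :: real and F :: "real \<Rightarrow> real^2"
  assumes "G > 0" and "T > 0"
    and "\<forall>t. F (t + T) = F t"
    and "\<exists>F'. (\<forall>t. (F has_vector_derivative F' t) (at t)) \<and> continuous_on UNIV F'"
    and "0 < a" and "a < 1"
    and "\<forall>lam\<in>{0..1}. curvature_bound_function (vfield G F lam) (UNIV \<times> Omega) (m_fun a)"
  shows "\<exists>b>0. \<forall>lam\<in>{0..1}.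
           bound_set (vfield G F lam) (UNIV \<times> Omega) (UNIV \<times> (Gamma a \<inter> Delta b))"
proof -
  note G0 = assms(1) and T0 = assms(2) and per = assms(3) and a0 = assms(5) and a1 = assms(6)
    and cbf = assms(7)
  obtain F' where FD: "\<forall>t. (F has_vector_derivative F' t) (at t)" and F'c: "continuous_on UNIV F'"
    using assms(4) by blast
  have Fc: "continuous_on UNIV F"
    using FD by (intro continuous_at_imp_continuous_on) (auto intro: has_vector_derivative_continuous)
  obtain M0 where M0: "\<forall>t. norm (F t) \<le> M0" using periodic_bounded[OF Fc per T0] by blast
  obtain M10 where M10: "\<forall>t. norm (F' t) \<le> M10" using periodic_bounded[OF F'c deriv_periodic[OF FD per] T0] by blast
  define M where "M = max M0 0"
  define M1 where "M1 = max M10 0"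
  have FM: "\<And>t. norm (F t) \<le> M" using M0 M_def by (meson max.coboundedI1)
  have F1M: "\<And>t. norm (F' t) \<le> M1" using M10 M1_def by (meson max.coboundedI1)
  have Mn: "0 \<le> M" "0 \<le> M1" using M_def M1_def by auto
  define d0 where "d0 = 1 - a\<^sup>2"
  define E2 where "E2 = 16*G*M\<^sup>2/d0 + 32*M\<^sup>2*(1+G+M)/d0 + 512*M^4/d0\<^sup>2 + 4*M\<^sup>2 + 4*M*M1 + (G + 16*M\<^sup>2/d0)*M + M\<^sup>2"
  define E3 where "E3 = 16*M\<^sup>2 + (16*M\<^sup>2 + E2 + M + M1)/(1-a)"
  obtain b where b1: "1 \<le> b" and C1: "4 * M \<le> b\<^sup>2 * (1 - a)"
    and C2: "16*M\<^sup>2/d0 + M \<le> b\<^sup>2 * (1-a)\<^sup>2 * d0 / 2"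
    and C3: "E3 < b\<^sup>2 * (1-a)\<^sup>2 * d0 / 8" and C4: "M < b\<^sup>2"
    using choose_b[OF a0 a1 Mn G0] unfolding d0_def E2_def E3_def by blast
  define E :: "state set" where "E = UNIV \<times> (Gamma a \<inter> Delta b)"
  have E_eq: "E = {z. norm (fst (snd z)) \<le> a \<and> b * norm (fst (snd z)) + norm (snd (snd z)) \<le> b}"
    using a1 by (auto simp: E_def Gamma_def Delta_def)
  have ED: "E \<subseteq> UNIV \<times> Omega" using a1 by (auto simp: E_def Gamma_def Delta_def Omega_def)
  have Ecl: "closed E" unfolding E_eq
    by (intro closed_Collect_conj closed_Collect_le continuous_intros)
  define U where "U = {z::state. norm (fst (snd z)) < a \<and> b * norm (fst (snd z)) + norm (snd (snd z)) < b}"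
  have Uo: "open U" unfolding U_def by (intro open_Collect_conj open_Collect_less continuous_intros)
  have UE: "U \<subseteq> E" unfolding U_def E_eq by auto
  show ?thesis
  proof (intro exI[of _ b] conjI ballI)
    show "0 < b" using b1 by simp
    fix lam :: real assume lam: "lam \<in> {0..1}"
    have l0: "0 \<le> lam" and l1: "lam \<le> 1" using lam by auto
    show "bound_set (vfield G F lam) (UNIV \<times> Omega) (UNIV \<times> (Gamma a \<inter> Delta b))"
      unfolding bound_set_def E_def[symmetric]
    proof (intro conjI allI impI notI)
      show "E \<subseteq> UNIV \<times> Omega" by (rule ED)
      show "closedin (top_of_set (UNIV \<times> Omega)) E" using closed_subset[OF ED Ecl] .
      fix \<epsilon> :: real assume e0: "0 < \<epsilon>"
      assume "\<exists>z\<in>frontier E. \<exists>y. y 0 = z \<and> (\<forall>s\<in>{- \<epsilon><..<\<epsilon>}. (y has_vector_derivative vfield G F lam (y s)) (at s) \<and> y s \<in> E)"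
      then obtain z y where zf: "z \<in> frontier E" and y0: "y 0 = z"
        and yd: "\<And>s. \<bar>s\<bar> < \<epsilon> \<Longrightarrow> (y has_vector_derivative vfield G F lam (y s)) (at s)"
        and yE: "\<And>s. \<bar>s\<bar> < \<epsilon> \<Longrightarrow> y s \<in> E"
        by (auto simp: abs_less_iff)
      have zE: "z \<in> E" using zf Ecl by (simp add: frontier_def closure_closed)
      have znI: "z \<notin> interior E" using zf by (simp add: frontier_def)
      define X where "X s = fst (snd (y s))" for s
      define Pp where "Pp s = snd (snd (y s))" for s
      define \<tau> where "\<tau> s = fst (y s)" for s
      have Xd: "\<And>s. \<bar>s\<bar> < \<epsilon> \<Longrightarrow> (X has_vector_derivative Pp s) (at s)"
        unfolding X_def Pp_def using traj_comp(2)[OF yd] by blast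
      have Pd: "\<And>s. \<bar>s\<bar> < \<epsilon> \<Longrightarrow> (Pp has_vector_derivative fld G F lam (\<tau> s) (X s) (Pp s)) (at s)"
        unfolding X_def Pp_def \<tau>_def using traj_comp(3)[OF yd] by blast
      have td: "\<And>s. \<bar>s\<bar> < \<epsilon> \<Longrightarrow> (\<tau> has_real_derivative 1) (at s)"
        unfolding \<tau>_def using traj_comp(1)[OF yd] by blast
      have inE: "\<And>s. \<bar>s\<bar> < \<epsilon> \<Longrightarrow> norm (X s) \<le> a \<and> b * norm (X s) + norm (Pp s) \<le> b"
        using yE unfolding E_eq X_def Pp_def by blast
      have e00: "\<bar>0::real\<bar> < \<epsilon>" using e0 by simp
      show False
      proof (cases "norm (X 0) = a")
        case True
        have ele: "m_fun a (y s) \<le> 0" if "\<bar>s\<bar> < \<epsilon>" for s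
        proof -
          have "(norm (X s))\<^sup>2 \<le> a\<^sup>2" using inE[OF that] by (intro power_mono) auto
          then show ?thesis by (simp add: m_fun_eq X_def)
        qed
        have ey0: "m_fun a (y 0) = 0" using True by (simp add: m_fun_eq X_def)
        have "norm (fst (snd (y 0))) < 1" using True a1 X_def by simp
        then obtain Dv where vd: "(vfield G F lam has_derivative Dv) (at (y 0))"
          using vfield_diff[of "y 0" F F'] FD by blast
        show False
          using case_curv[OF cbf[rule_format, OF lam] e0 yd _ ele ey0 vd] yE ED by blast
      next
        case False
        then have Xa: "norm (X 0) < a" using inE[OF e00] by simp
        have bd: "b * norm (X 0) + norm (Pp 0) = b"
        proof (rule ccontr)
          assume "b * norm (X 0) + norm (Pp 0) \<noteq> b"
          then have "z \<in> U" using inE[OF e00] Xa y0 unfolding U_def X_def Pp_def by auto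
          then have "z \<in> interior E" using Uo UE interior_maximal by blast
          then show False using znI by simp
        qed
        show False
        proof (cases "X 0 = 0")
          case True
          show False
            using case_zero[OF e0 Xd[OF e00] Pd[OF e00] True _ _ inE[THEN conjunct2] FM C4 l0 l1] bd True b1
            by simp
        next
          case False
          show False
            using case_pos[OF e0 Xd Pd td FD[rule_format] FM F1M inE False bd a1 b1 G0 l0 l1 d0_def E2_def E3_def C1 C2 C3]
            .
        qed
      qed
    qed
  qed
qed

end
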